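(* Let $n\ge0$ and let $H_n$ be the pyrene system with $n$ pyrene fragments. Then $$IDF(H_n)=\frac{\sqrt{2}}{32}(3-2\sqrt{2})^n+\frac{7-5\sqrt{2}}{8}n(3-2\sqrt{2})^n-\frac{\sqrt{2}}{32}(3+2\sqrt{2})^n+\frac{7+5\sqrt{2}}{8}n(3+2\sqrt{2})^n.$$
   Context: Pyrene system: draw the hexagonal lattice so that every hexagon has two vertical sides; horizontally adjacent hexagons then share a vertical edge. For $n\ge1$, $H_n$ is the hexagonal system (the plane graph formed by the vertices and edges of the following $4n$ hexagons) consisting of a horizontal linear row of $2n$ hexagons $h_{1,1},h_{1,2},\dots,h_{n,1},h_{n,2}$, consecutive ones sharing a vertical edge, together with, for each $i$, a hexagon $s_{i,1}$ directly above and a hexagon $s_{i,2}$ directly below the common edge of $h_{i,1}$ and $h_{i,2}$ (each sharing an edge with both $h_{i,1}$ and $h_{i,2}$). $H_0$ is the null graph, which has exactly one (empty) perfect matching with forcing number $0$. For a perfect matching $M$ of $G$, a forcing set is a subset $S\subseteq M$ contained in no other perfect matching of $G$, and the forcing number $f(G,M)$ is the minimum size of a forcing set. The degree of freedom $IDF(G)$ is $\sum_{M}f(G,M)$, summed over all perfect matchings $M$ of $G$. *)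

theory Defs
  imports Complex_Main
begin

(* Coordinates: a hexagon (with two vertical sides) centred at (cx,cy) has vertices
   (cx,cy+2),(cx+1,cy+1),(cx+1,cy-1),(cx,cy-2),(cx-1,cy-1),(cx-1,cy+1)
   (x scaled by 2/sqrt 3, y scaled by 2 of a unit hexagon).  Horizontally
   adjacent hexagons have centres differing by (2,0); they share a vertical edge. *)

definition hex_vertices :: "int \<times> int \<Rightarrow> (int \<times> int) set" where
  "hex_vertices c = (case c of (cx, cy) \<Rightarrow>
     {(cx, cy+2), (cx+1, cy+1), (cx+1, cy-1), (cx, cy-2), (cx-1, cy-1), (cx-1, cy+1)})"

definition hex_edges :: "int \<times> int \<Rightarrow> (int \<times> int) set set" where
  "hex_edges c = (case c of (cx, cy) \<Rightarrow>
     {{(cx, cy+2), (cx+1, cy+1)}, {(cx+1, cy+1), (cx+1, cy-1)},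
      {(cx+1, cy-1), (cx, cy-2)}, {(cx, cy-2), (cx-1, cy-1)},
      {(cx-1, cy-1), (cx-1, cy+1)}, {(cx-1, cy+1), (cx, cy+2)}})"

(* Hexagon centres of H_n (0-indexed fragments i < n):
   row hexagons h_{i+1,1}, h_{i+1,2} at (4i,0), (4i+2,0);
   s_{i+1,1} above and s_{i+1,2} below their common vertical edge (x = 4i+1):
   centres (4i+1, 3) and (4i+1, -3). *)
definition pyrene_hexagons :: "nat \<Rightarrow> (int \<times> int) set" where
  "pyrene_hexagons n =
     (\<Union>i\<in>{..<n}. {(4 * int i, 0), (4 * int i + 2, 0), (4 * int i + 1, 3), (4 * int i + 1, -3)})"

definition pyrene_V :: "nat \<Rightarrow> (int \<times> int) set" where
  "pyrene_V n = (\<Union>c\<in>pyrene_hexagons n. hex_vertices c)"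

definition pyrene_E :: "nat \<Rightarrow> (int \<times> int) set set" where
  "pyrene_E n = (\<Union>c\<in>pyrene_hexagons n. hex_edges c)"

definition perfect_matching :: "'a set \<Rightarrow> 'a set set \<Rightarrow> 'a set set \<Rightarrow> bool" where
  "perfect_matching V E M \<longleftrightarrow> M \<subseteq> E \<and> (\<forall>v\<in>V. \<exists>!e. e \<in> M \<and> v \<in> e)"

definition forcing_set :: "'a set \<Rightarrow> 'a set set \<Rightarrow> 'a set set \<Rightarrow> 'a set set \<Rightarrow> bool" where
  "forcing_set V E M S \<longleftrightarrow> S \<subseteq> M \<and>
     (\<forall>M'. perfect_matching V E M' \<and> S \<subseteq> M' \<longrightarrow> M' = M)"

definition forcing_number :: "'a set \<Rightarrow> 'a set set \<Rightarrow> 'a set set \<Rightarrow> nat" where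
  "forcing_number V E M = Min (card ` {S. forcing_set V E M S})"

definition IDF :: "'a set \<Rightarrow> 'a set set \<Rightarrow> nat" where
  "IDF V E = (\<Sum>M\<in>{M. perfect_matching V E M}. forcing_number V E M)"

end

theory Submission
  imports Defs
begin

datatype vt = AP | AM | T1 | T2 | T3 | T4 | T5 | CP | U1 | U2 | U3 | U4 | U5 | CM

fun P :: "vt \<Rightarrow> nat \<Rightarrow> int \<times> int" where
  "P AP j = (4 * int j - 1, 1)"
| "P AM j = (4 * int j - 1, -1)"
| "P T1 j = (4 * int j, 2)"
| "P T2 j = (4 * int j, 4)"
| "P T3 j = (4 * int j + 1, 5)"
| "P T4 j = (4 * int j + 2, 4)"
| "P T5 j = (4 * int j + 2, 2)"
| "P CP j = (4 * int j + 1, 1)"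
| "P U1 j = (4 * int j, -2)"
| "P U2 j = (4 * int j, -4)"
| "P U3 j = (4 * int j + 1, -5)"
| "P U4 j = (4 * int j + 2, -4)"
| "P U5 j = (4 * int j + 2, -2)"
| "P CM j = (4 * int j + 1, -1)"

definition dec :: "int \<times> int \<Rightarrow> vt \<times> nat" where
 "dec p = (case p of (x, y) \<Rightarrow>
    (if y = 5 then T3 else if y = 4 then (if x mod 4 = 0 then T2 else T4)
     else if y = 2 then (if x mod 4 = 0 then T1 else T5)
     else if y = 1 then (if x mod 4 = 3 then AP else CP)
     else if y = -1 then (if x mod 4 = 3 then AM else CM)
     else if y = -2 then (if x mod 4 = 0 then U1 else U5)
     else if y = -4 then (if x mod 4 = 0 then U2 else U4)
     else U3, nat ((x + 1) div 4)))"

lemma m1: "(4 * int j - 1) mod 4 = 3" "(4 * int j + 1) mod 4 = 1" "(4 * int j + 2) mod 4 = 2" "(4 * int j) mod 4 = 0"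
  by presburger+

lemma m2: "nat ((4 * int j - 1 + 1) div 4) = j" "nat ((4 * int j + 1) div 4) = j" "nat ((4 * int j + 1 + 1) div 4) = j"
  "nat ((4 * int j + 2 + 1) div 4) = j"
proof -
  have a: "(4 * int j + k) div 4 = int j" if "0 \<le> k" "k < 4" for k
    using that by linarith
  show "nat ((4 * int j - 1 + 1) div 4) = j" "nat ((4 * int j + 1) div 4) = j" "nat ((4 * int j + 1 + 1) div 4) = j"
  "nat ((4 * int j + 2 + 1) div 4) = j" using a[of 0] a[of 1] a[of 2] a[of 3] by (simp_all add: add.assoc)
qed

lemma dec_P: "dec (P a j) = (a, j)"
  by (cases a) (simp_all add: dec_def m1 m2)

lemma P_inj[simp]: "(P a i = P b j) = (a = b \<and> i = j)"
  by (metis dec_P prod.inject)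

declare P.simps[simp del]

definition frag_edges :: "nat \<Rightarrow> (int \<times> int) set set" where
 "frag_edges j = {{P AP j, P T1 j}, {P T1 j, P CP j}, {P CP j, P CM j}, {P U1 j, P CM j}, {P AM j, P U1 j},
   {P AP j, P AM j}, {P T5 j, P AP (Suc j)}, {P AP (Suc j), P AM (Suc j)}, {P U5 j, P AM (Suc j)},
   {P CM j, P U5 j}, {P CP j, P T5 j}, {P T1 j, P T2 j}, {P T2 j, P T3 j}, {P T3 j, P T4 j}, {P T4 j, P T5 j},
   {P U1 j, P U2 j}, {P U2 j, P U3 j}, {P U3 j, P U4 j}, {P U4 j, P U5 j}}"

definition frag_verts :: "nat \<Rightarrow> (int \<times> int) set" where
 "frag_verts j = {P AP j, P AM j, P T1 j, P T2 j, P T3 j, P T4 j, P T5 j, P CP j, P U1 j, P U2 j, P U3 j, P U4 j, P U5 j,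
    P CM j, P AP (Suc j), P AM (Suc j)}"

lemma E_eq: "pyrene_E n = (\<Union>j<n. frag_edges j)"
proof -
  have "(\<Union>c\<in>{(4 * int i, 0), (4 * int i + 2, 0), (4 * int i + 1, 3), (4 * int i + 1, -3)}. hex_edges c)
     = frag_edges i" for i
    unfolding frag_edges_def hex_edges_def P.simps by (auto simp: insert_commute algebra_simps)
  then show ?thesis unfolding pyrene_E_def pyrene_hexagons_def by auto
qed

lemma V_eq: "pyrene_V n = (\<Union>j<n. frag_verts j)"
proof -
  have "(\<Union>c\<in>{(4 * int i, 0), (4 * int i + 2, 0), (4 * int i + 1, 3), (4 * int i + 1, -3)}. hex_vertices c)
     = frag_verts i" for i
    unfolding frag_verts_def hex_vertices_def P.simps by (auto simp: insert_commute algebra_simps)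
  then show ?thesis unfolding pyrene_V_def pyrene_hexagons_def by auto
qed

lemma pm_ex: "perfect_matching V E M \<Longrightarrow> v \<in> V \<Longrightarrow> \<exists>e\<in>M. v \<in> e"
  unfolding perfect_matching_def by (metis (no_types, lifting))

lemma pm_uniq: assumes "perfect_matching V E M" "v \<in> V" "e1 \<in> M" "e2 \<in> M" "v \<in> e1" "v \<in> e2" shows "e1 = e2"
proof -
  have "\<forall>v\<in>V. \<exists>!e. e \<in> M \<and> v \<in> e" using assms(1) unfolding perfect_matching_def by (rule conjunct2)
  then have "\<exists>!e. e \<in> M \<and> v \<in> e" using assms(2) by (rule bspec)
  then show ?thesis using assms(3-) by (metis (no_types, lifting))
qed

lemma one2:
  assumes "perfect_matching V E M" "v \<in> V" "\<And>e. e \<in> E \<Longrightarrow> v \<in> e \<Longrightarrow> e = a \<or> e = b"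
    "v \<in> a" "v \<in> b" "a \<noteq> b"
  shows "(a \<in> M \<and> b \<notin> M) \<or> (a \<notin> M \<and> b \<in> M)"
proof -
  obtain e where e: "e \<in> M" "v \<in> e" using pm_ex[OF assms(1,2)] by (elim bexE)
  have "M \<subseteq> E" using assms(1) unfolding perfect_matching_def by (rule conjunct1)
  then have "e \<in> E" using e(1) by (rule subsetD)
  then have ee: "e = a \<or> e = b" using assms(3) e(2) by simp
  have A: "x \<in> M \<longleftrightarrow> x = e" if "v \<in> x" for x using pm_uniq[OF assms(1,2) _ e(1) that e(2)] e(1) by auto
  show ?thesis using A[OF assms(4)] A[OF assms(5)] ee assms(6) by auto
qed

lemma one3:
  assumes "perfect_matching V E M" "v \<in> V" "\<And>e. e \<in> E \<Longrightarrow> v \<in> e \<Longrightarrow> e = a \<or> e = b \<or> e = c"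
    "v \<in> a" "v \<in> b" "v \<in> c" "a \<noteq> b" "a \<noteq> c" "b \<noteq> c"
  shows "(a \<in> M \<and> b \<notin> M \<and> c \<notin> M) \<or> (a \<notin> M \<and> b \<in> M \<and> c \<notin> M) \<or> (a \<notin> M \<and> b \<notin> M \<and> c \<in> M)"
proof -
  obtain e where e: "e \<in> M" "v \<in> e" using pm_ex[OF assms(1,2)] by (elim bexE)
  have "M \<subseteq> E" using assms(1) unfolding perfect_matching_def by (rule conjunct1)
  then have "e \<in> E" using e(1) by (rule subsetD)
  then have ee: "e = a \<or> e = b \<or> e = c" using assms(3) e(2) by simp
  have A: "x \<in> M \<longleftrightarrow> x = e" if "v \<in> x" for x using pm_uniq[OF assms(1,2) _ e(1) that e(2)] e(1) by auto
  show ?thesis using A[OF assms(4)] A[OF assms(5)] A[OF assms(6)] ee assms(7-9) by auto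
qed

lemma inFV: "P a j \<in> frag_verts j"
  unfolding frag_verts_def by (cases a) simp_all

lemma inV: "j < n \<Longrightarrow> P a j \<in> pyrene_V n"
  unfolding V_eq using inFV by blast

lemma inV_S: "j < n \<Longrightarrow> P AP (Suc j) \<in> pyrene_V n" "j < n \<Longrightarrow> P AM (Suc j) \<in> pyrene_V n"
  unfolding V_eq frag_verts_def by blast+

lemma dbl_ne[simp]: "a \<noteq> c \<Longrightarrow> a \<noteq> d \<Longrightarrow> {a, b} \<noteq> {c, d}" "b \<noteq> c \<Longrightarrow> b \<noteq> d \<Longrightarrow> {a, b} \<noteq> {c, d}"
  by auto

declare doubleton_eq_iff[simp]

lemma nb_T1: assumes "e \<in> pyrene_E n" "P T1 j \<in> e" shows "e = {P AP j, P T1 j} \<or> e = {P T1 j, P CP j} \<or> e = {P T1 j, P T2 j}"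
proof -
  obtain i where "i < n" "e \<in> frag_edges i" using assms(1) E_eq by auto
  then show ?thesis using assms(2) unfolding frag_edges_def by (simp only: insert_iff empty_iff; elim disjE; simp)
qed

lemma one_T1: assumes "perfect_matching (pyrene_V n) (pyrene_E n) M" "j < n"
  shows "(({P AP j, P T1 j} \<in> M \<and> {P T1 j, P CP j} \<notin> M \<and> {P T1 j, P T2 j} \<notin> M) \<or> ({P AP j, P T1 j} \<notin> M \<and> {P T1 j, P CP j} \<in> M \<and> {P T1 j, P T2 j} \<notin> M) \<or> ({P AP j, P T1 j} \<notin> M \<and> {P T1 j, P CP j} \<notin> M \<and> {P T1 j, P T2 j} \<in> M))"
  by (rule one3[OF assms(1) inV[OF assms(2), of T1] nb_T1[where j=j]]) simp_all

lemma nb_T2: assumes "e \<in> pyrene_E n" "P T2 j \<in> e" shows "e = {P T1 j, P T2 j} \<or> e = {P T2 j, P T3 j}"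
proof -
  obtain i where "i < n" "e \<in> frag_edges i" using assms(1) E_eq by auto
  then show ?thesis using assms(2) unfolding frag_edges_def by (simp only: insert_iff empty_iff; elim disjE; simp)
qed

lemma one_T2: assumes "perfect_matching (pyrene_V n) (pyrene_E n) M" "j < n"
  shows "(({P T1 j, P T2 j} \<in> M \<and> {P T2 j, P T3 j} \<notin> M) \<or> ({P T1 j, P T2 j} \<notin> M \<and> {P T2 j, P T3 j} \<in> M))"
  by (rule one2[OF assms(1) inV[OF assms(2), of T2] nb_T2[where j=j]]) simp_all

lemma nb_T3: assumes "e \<in> pyrene_E n" "P T3 j \<in> e" shows "e = {P T2 j, P T3 j} \<or> e = {P T3 j, P T4 j}"
proof -
  obtain i where "i < n" "e \<in> frag_edges i" using assms(1) E_eq by auto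
  then show ?thesis using assms(2) unfolding frag_edges_def by (simp only: insert_iff empty_iff; elim disjE; simp)
qed

lemma one_T3: assumes "perfect_matching (pyrene_V n) (pyrene_E n) M" "j < n"
  shows "(({P T2 j, P T3 j} \<in> M \<and> {P T3 j, P T4 j} \<notin> M) \<or> ({P T2 j, P T3 j} \<notin> M \<and> {P T3 j, P T4 j} \<in> M))"
  by (rule one2[OF assms(1) inV[OF assms(2), of T3] nb_T3[where j=j]]) simp_all

lemma nb_T4: assumes "e \<in> pyrene_E n" "P T4 j \<in> e" shows "e = {P T3 j, P T4 j} \<or> e = {P T4 j, P T5 j}"
proof -
  obtain i where "i < n" "e \<in> frag_edges i" using assms(1) E_eq by auto
  then show ?thesis using assms(2) unfolding frag_edges_def by (simp only: insert_iff empty_iff; elim disjE; simp)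
qed

lemma one_T4: assumes "perfect_matching (pyrene_V n) (pyrene_E n) M" "j < n"
  shows "(({P T3 j, P T4 j} \<in> M \<and> {P T4 j, P T5 j} \<notin> M) \<or> ({P T3 j, P T4 j} \<notin> M \<and> {P T4 j, P T5 j} \<in> M))"
  by (rule one2[OF assms(1) inV[OF assms(2), of T4] nb_T4[where j=j]]) simp_all

lemma nb_T5: assumes "e \<in> pyrene_E n" "P T5 j \<in> e" shows "e = {P T4 j, P T5 j} \<or> e = {P CP j, P T5 j} \<or> e = {P T5 j, P AP (Suc j)}"
proof -
  obtain i where "i < n" "e \<in> frag_edges i" using assms(1) E_eq by auto
  then show ?thesis using assms(2) unfolding frag_edges_def by (simp only: insert_iff empty_iff; elim disjE; simp)
qed

lemma one_T5: assumes "perfect_matching (pyrene_V n) (pyrene_E n) M" "j < n"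
  shows "(({P T4 j, P T5 j} \<in> M \<and> {P CP j, P T5 j} \<notin> M \<and> {P T5 j, P AP (Suc j)} \<notin> M) \<or> ({P T4 j, P T5 j} \<notin> M \<and> {P CP j, P T5 j} \<in> M \<and> {P T5 j, P AP (Suc j)} \<notin> M) \<or> ({P T4 j, P T5 j} \<notin> M \<and> {P CP j, P T5 j} \<notin> M \<and> {P T5 j, P AP (Suc j)} \<in> M))"
  by (rule one3[OF assms(1) inV[OF assms(2), of T5] nb_T5[where j=j]]) simp_all

lemma nb_CP: assumes "e \<in> pyrene_E n" "P CP j \<in> e" shows "e = {P T1 j, P CP j} \<or> e = {P CP j, P CM j} \<or> e = {P CP j, P T5 j}"
proof -
  obtain i where "i < n" "e \<in> frag_edges i" using assms(1) E_eq by auto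
  then show ?thesis using assms(2) unfolding frag_edges_def by (simp only: insert_iff empty_iff; elim disjE; simp)
qed

lemma one_CP: assumes "perfect_matching (pyrene_V n) (pyrene_E n) M" "j < n"
  shows "(({P T1 j, P CP j} \<in> M \<and> {P CP j, P CM j} \<notin> M \<and> {P CP j, P T5 j} \<notin> M) \<or> ({P T1 j, P CP j} \<notin> M \<and> {P CP j, P CM j} \<in> M \<and> {P CP j, P T5 j} \<notin> M) \<or> ({P T1 j, P CP j} \<notin> M \<and> {P CP j, P CM j} \<notin> M \<and> {P CP j, P T5 j} \<in> M))"
  by (rule one3[OF assms(1) inV[OF assms(2), of CP] nb_CP[where j=j]]) simp_all

lemma nb_U1: assumes "e \<in> pyrene_E n" "P U1 j \<in> e" shows "e = {P AM j, P U1 j} \<or> e = {P U1 j, P CM j} \<or> e = {P U1 j, P U2 j}"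
proof -
  obtain i where "i < n" "e \<in> frag_edges i" using assms(1) E_eq by auto
  then show ?thesis using assms(2) unfolding frag_edges_def by (simp only: insert_iff empty_iff; elim disjE; simp)
qed

lemma one_U1: assumes "perfect_matching (pyrene_V n) (pyrene_E n) M" "j < n"
  shows "(({P AM j, P U1 j} \<in> M \<and> {P U1 j, P CM j} \<notin> M \<and> {P U1 j, P U2 j} \<notin> M) \<or> ({P AM j, P U1 j} \<notin> M \<and> {P U1 j, P CM j} \<in> M \<and> {P U1 j, P U2 j} \<notin> M) \<or> ({P AM j, P U1 j} \<notin> M \<and> {P U1 j, P CM j} \<notin> M \<and> {P U1 j, P U2 j} \<in> M))"
  by (rule one3[OF assms(1) inV[OF assms(2), of U1] nb_U1[where j=j]]) simp_all

lemma nb_U2: assumes "e \<in> pyrene_E n" "P U2 j \<in> e" shows "e = {P U1 j, P U2 j} \<or> e = {P U2 j, P U3 j}"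
proof -
  obtain i where "i < n" "e \<in> frag_edges i" using assms(1) E_eq by auto
  then show ?thesis using assms(2) unfolding frag_edges_def by (simp only: insert_iff empty_iff; elim disjE; simp)
qed

lemma one_U2: assumes "perfect_matching (pyrene_V n) (pyrene_E n) M" "j < n"
  shows "(({P U1 j, P U2 j} \<in> M \<and> {P U2 j, P U3 j} \<notin> M) \<or> ({P U1 j, P U2 j} \<notin> M \<and> {P U2 j, P U3 j} \<in> M))"
  by (rule one2[OF assms(1) inV[OF assms(2), of U2] nb_U2[where j=j]]) simp_all

lemma nb_U3: assumes "e \<in> pyrene_E n" "P U3 j \<in> e" shows "e = {P U2 j, P U3 j} \<or> e = {P U3 j, P U4 j}"
proof -
  obtain i where "i < n" "e \<in> frag_edges i" using assms(1) E_eq by auto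
  then show ?thesis using assms(2) unfolding frag_edges_def by (simp only: insert_iff empty_iff; elim disjE; simp)
qed

lemma one_U3: assumes "perfect_matching (pyrene_V n) (pyrene_E n) M" "j < n"
  shows "(({P U2 j, P U3 j} \<in> M \<and> {P U3 j, P U4 j} \<notin> M) \<or> ({P U2 j, P U3 j} \<notin> M \<and> {P U3 j, P U4 j} \<in> M))"
  by (rule one2[OF assms(1) inV[OF assms(2), of U3] nb_U3[where j=j]]) simp_all

lemma nb_U4: assumes "e \<in> pyrene_E n" "P U4 j \<in> e" shows "e = {P U3 j, P U4 j} \<or> e = {P U4 j, P U5 j}"
proof -
  obtain i where "i < n" "e \<in> frag_edges i" using assms(1) E_eq by auto
  then show ?thesis using assms(2) unfolding frag_edges_def by (simp only: insert_iff empty_iff; elim disjE; simp)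
qed

lemma one_U4: assumes "perfect_matching (pyrene_V n) (pyrene_E n) M" "j < n"
  shows "(({P U3 j, P U4 j} \<in> M \<and> {P U4 j, P U5 j} \<notin> M) \<or> ({P U3 j, P U4 j} \<notin> M \<and> {P U4 j, P U5 j} \<in> M))"
  by (rule one2[OF assms(1) inV[OF assms(2), of U4] nb_U4[where j=j]]) simp_all

lemma nb_U5: assumes "e \<in> pyrene_E n" "P U5 j \<in> e" shows "e = {P U4 j, P U5 j} \<or> e = {P CM j, P U5 j} \<or> e = {P U5 j, P AM (Suc j)}"
proof -
  obtain i where "i < n" "e \<in> frag_edges i" using assms(1) E_eq by auto
  then show ?thesis using assms(2) unfolding frag_edges_def by (simp only: insert_iff empty_iff; elim disjE; simp)
qed

lemma one_U5: assumes "perfect_matching (pyrene_V n) (pyrene_E n) M" "j < n"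
  shows "(({P U4 j, P U5 j} \<in> M \<and> {P CM j, P U5 j} \<notin> M \<and> {P U5 j, P AM (Suc j)} \<notin> M) \<or> ({P U4 j, P U5 j} \<notin> M \<and> {P CM j, P U5 j} \<in> M \<and> {P U5 j, P AM (Suc j)} \<notin> M) \<or> ({P U4 j, P U5 j} \<notin> M \<and> {P CM j, P U5 j} \<notin> M \<and> {P U5 j, P AM (Suc j)} \<in> M))"
  by (rule one3[OF assms(1) inV[OF assms(2), of U5] nb_U5[where j=j]]) simp_all

lemma nb_CM: assumes "e \<in> pyrene_E n" "P CM j \<in> e" shows "e = {P U1 j, P CM j} \<or> e = {P CP j, P CM j} \<or> e = {P CM j, P U5 j}"
proof -
  obtain i where "i < n" "e \<in> frag_edges i" using assms(1) E_eq by auto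
  then show ?thesis using assms(2) unfolding frag_edges_def by (simp only: insert_iff empty_iff; elim disjE; simp)
qed

lemma one_CM: assumes "perfect_matching (pyrene_V n) (pyrene_E n) M" "j < n"
  shows "(({P U1 j, P CM j} \<in> M \<and> {P CP j, P CM j} \<notin> M \<and> {P CM j, P U5 j} \<notin> M) \<or> ({P U1 j, P CM j} \<notin> M \<and> {P CP j, P CM j} \<in> M \<and> {P CM j, P U5 j} \<notin> M) \<or> ({P U1 j, P CM j} \<notin> M \<and> {P CP j, P CM j} \<notin> M \<and> {P CM j, P U5 j} \<in> M))"
  by (rule one3[OF assms(1) inV[OF assms(2), of CM] nb_CM[where j=j]]) simp_all

lemma nb_APS: assumes "e \<in> pyrene_E n" "P AP (Suc j) \<in> e" shows "e = {P AP (Suc j), P AM (Suc j)} \<or> e = {P T5 j, P AP (Suc j)} \<or> e = {P AP (Suc j), P T1 (Suc j)}"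
proof -
  obtain i where "i < n" "e \<in> frag_edges i" using assms(1) E_eq by auto
  then show ?thesis using assms(2) unfolding frag_edges_def by (simp only: insert_iff empty_iff; elim disjE; simp)
qed

lemma one_APS: assumes "perfect_matching (pyrene_V n) (pyrene_E n) M" "j < n"
  shows "(({P AP (Suc j), P AM (Suc j)} \<in> M \<and> {P T5 j, P AP (Suc j)} \<notin> M \<and> {P AP (Suc j), P T1 (Suc j)} \<notin> M) \<or> ({P AP (Suc j), P AM (Suc j)} \<notin> M \<and> {P T5 j, P AP (Suc j)} \<in> M \<and> {P AP (Suc j), P T1 (Suc j)} \<notin> M) \<or> ({P AP (Suc j), P AM (Suc j)} \<notin> M \<and> {P T5 j, P AP (Suc j)} \<notin> M \<and> {P AP (Suc j), P T1 (Suc j)} \<in> M))"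
  by (rule one3[OF assms(1) inV_S(1)[OF assms(2)] nb_APS[where j=j]]) simp_all

lemma nb_AMS: assumes "e \<in> pyrene_E n" "P AM (Suc j) \<in> e" shows "e = {P AP (Suc j), P AM (Suc j)} \<or> e = {P U5 j, P AM (Suc j)} \<or> e = {P AM (Suc j), P U1 (Suc j)}"
proof -
  obtain i where "i < n" "e \<in> frag_edges i" using assms(1) E_eq by auto
  then show ?thesis using assms(2) unfolding frag_edges_def by (simp only: insert_iff empty_iff; elim disjE; simp)
qed

lemma one_AMS: assumes "perfect_matching (pyrene_V n) (pyrene_E n) M" "j < n"
  shows "(({P AP (Suc j), P AM (Suc j)} \<in> M \<and> {P U5 j, P AM (Suc j)} \<notin> M \<and> {P AM (Suc j), P U1 (Suc j)} \<notin> M) \<or> ({P AP (Suc j), P AM (Suc j)} \<notin> M \<and> {P U5 j, P AM (Suc j)} \<in> M \<and> {P AM (Suc j), P U1 (Suc j)} \<notin> M) \<or> ({P AP (Suc j), P AM (Suc j)} \<notin> M \<and> {P U5 j, P AM (Suc j)} \<notin> M \<and> {P AM (Suc j), P U1 (Suc j)} \<in> M))"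
  by (rule one3[OF assms(1) inV_S(2)[OF assms(2)] nb_AMS[where j=j]]) simp_all

lemma nb_AP0: assumes "e \<in> pyrene_E n" "P AP 0 \<in> e" shows "e = {P AP 0, P AM 0} \<or> e = {P AP 0, P T1 0}"
proof -
  obtain i where "i < n" "e \<in> frag_edges i" using assms(1) E_eq by auto
  then show ?thesis using assms(2) unfolding frag_edges_def by (simp only: insert_iff empty_iff; elim disjE; simp)
qed

lemma one_AP0: assumes "perfect_matching (pyrene_V n) (pyrene_E n) M" "0 < n"
  shows "(({P AP 0, P AM 0} \<in> M \<and> {P AP 0, P T1 0} \<notin> M) \<or> ({P AP 0, P AM 0} \<notin> M \<and> {P AP 0, P T1 0} \<in> M))"
  by (rule one2[OF assms(1) inV[OF assms(2), of AP] nb_AP0]) simp_all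

lemma nb_AM0: assumes "e \<in> pyrene_E n" "P AM 0 \<in> e" shows "e = {P AP 0, P AM 0} \<or> e = {P AM 0, P U1 0}"
proof -
  obtain i where "i < n" "e \<in> frag_edges i" using assms(1) E_eq by auto
  then show ?thesis using assms(2) unfolding frag_edges_def by (simp only: insert_iff empty_iff; elim disjE; simp)
qed

lemma one_AM0: assumes "perfect_matching (pyrene_V n) (pyrene_E n) M" "0 < n"
  shows "(({P AP 0, P AM 0} \<in> M \<and> {P AM 0, P U1 0} \<notin> M) \<or> ({P AP 0, P AM 0} \<notin> M \<and> {P AM 0, P U1 0} \<in> M))"
  by (rule one2[OF assms(1) inV[OF assms(2), of AM] nb_AM0]) simp_all

definition "cutV M j \<longleftrightarrow> {P AP j, P AM j} \<in> M"
definition "cutR M j \<longleftrightarrow> {P AP j, P T1 j} \<in> M \<and> {P AM j, P U1 j} \<in> M"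
definition "cutL M j \<longleftrightarrow> (case j of 0 \<Rightarrow> False | Suc i \<Rightarrow> {P T5 i, P AP j} \<in> M \<and> {P U5 i, P AM j} \<in> M)"

definition "top0 j = {{P T1 j, P CP j}, {P T2 j, P T3 j}, {P T4 j, P T5 j}}"
definition "top1 j = {{P CP j, P T5 j}, {P T1 j, P T2 j}, {P T3 j, P T4 j}}"
definition "bot0 j = {{P U1 j, P CM j}, {P U2 j, P U3 j}, {P U4 j, P U5 j}}"
definition "bot1 j = {{P CM j, P U5 j}, {P U1 j, P U2 j}, {P U3 j, P U4 j}}"
definition "Rl j = {{P AP j, P T1 j}, {P T2 j, P T3 j}, {P T4 j, P T5 j}, {P CP j, P CM j}, {P AM j, P U1 j}, {P U2 j, P U3 j}, {P U4 j, P U5 j}}"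
definition "Ll j = {{P T5 j, P AP (Suc j)}, {P T1 j, P T2 j}, {P T3 j, P T4 j}, {P CP j, P CM j}, {P U5 j, P AM (Suc j)}, {P U1 j, P U2 j}, {P U3 j, P U4 j}}"

definition loc :: "nat \<Rightarrow> nat \<Rightarrow> (int \<times> int) set set" where
  "loc c j = (if c = 4 then Rl j else if c = 5 then Ll j else
     (if c < 2 then top0 j else top1 j) \<union> (if c mod 2 = 0 then bot0 j else bot1 j))"

lemma conf: assumes "perfect_matching V E M" "v \<in> V" "e1 \<in> M" "e2 \<in> M" "v \<in> e1" "v \<in> e2" "e1 \<noteq> e2" shows False
  using assms(7) pm_uniq[OF assms(1-6)] by (rule notE)

lemma ex_loc:
  assumes "(({P T1 j, P CP j} \<in> M \<and> {P T2 j, P T3 j} \<in> M \<and> {P T4 j, P T5 j} \<in> M) \<or>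
            ({P CP j, P T5 j} \<in> M \<and> {P T1 j, P T2 j} \<in> M \<and> {P T3 j, P T4 j} \<in> M)) \<and>
           (({P U1 j, P CM j} \<in> M \<and> {P U2 j, P U3 j} \<in> M \<and> {P U4 j, P U5 j} \<in> M) \<or>
            ({P CM j, P U5 j} \<in> M \<and> {P U1 j, P U2 j} \<in> M \<and> {P U3 j, P U4 j} \<in> M))
      \<or> ({P AP j, P T1 j} \<in> M \<and> {P T2 j, P T3 j} \<in> M \<and> {P T4 j, P T5 j} \<in> M \<and> {P CP j, P CM j} \<in> M \<and> {P AM j, P U1 j} \<in> M \<and> {P U2 j, P U3 j} \<in> M \<and> {P U4 j, P U5 j} \<in> M)
      \<or> ({P T5 j, P AP (Suc j)} \<in> M \<and> {P T1 j, P T2 j} \<in> M \<and> {P T3 j, P T4 j} \<in> M \<and> {P CP j, P CM j} \<in> M \<and> {P U5 j, P AM (Suc j)} \<in> M \<and> {P U1 j, P U2 j} \<in> M \<and> {P U3 j, P U4 j} \<in> M)"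
  shows "\<exists>c<6. loc c j \<subseteq> M"
proof -
  have ex6: "(\<exists>c<(6::nat). Q c) \<longleftrightarrow> Q 0 \<or> Q 1 \<or> Q 2 \<or> Q 3 \<or> Q 4 \<or> Q 5" for Q
    by (auto simp: numeral_eq_Suc less_Suc_eq)
  show ?thesis unfolding ex6 loc_def top0_def top1_def bot0_def bot1_def Rl_def Ll_def
    using assms by (elim disjE conjE; simp)
qed

lemma cut_dich:
  assumes pm: "perfect_matching (pyrene_V n) (pyrene_E n) M" and j: "j < n"
    and c: "cutV M j \<or> cutR M j \<or> cutL M j"
  shows "cutR M j \<or> ({P AP j, P T1 j} \<notin> M \<and> {P AM j, P U1 j} \<notin> M)"
proof -
  have a: "{P AP j, P T1 j} \<notin> M" if "e \<in> M" "P AP j \<in> e" "e \<noteq> {P AP j, P T1 j}" for e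
  proof
    assume "{P AP j, P T1 j} \<in> M"
    show False by (rule conf[OF pm inV[OF j, of AP] that(1) \<open>{P AP j, P T1 j} \<in> M\<close> that(2)]) (simp_all add: that(3))
  qed
  have b: "{P AM j, P U1 j} \<notin> M" if "e \<in> M" "P AM j \<in> e" "e \<noteq> {P AM j, P U1 j}" for e
  proof
    assume "{P AM j, P U1 j} \<in> M"
    show False by (rule conf[OF pm inV[OF j, of AM] that(1) \<open>{P AM j, P U1 j} \<in> M\<close> that(2)]) (simp_all add: that(3))
  qed
  show ?thesis
  proof (cases "cutR M j")
    case False
    then have "cutV M j \<or> cutL M j" using c by blast
    then show ?thesis
    proof
      assume "cutV M j"
      then show ?thesis using a[of "{P AP j, P AM j}"] b[of "{P AP j, P AM j}"] unfolding cutV_def by simp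
    next
      assume "cutL M j"
      then obtain i where i: "j = Suc i" "{P T5 i, P AP j} \<in> M" "{P U5 i, P AM j} \<in> M"
        unfolding cutL_def by (cases j) auto
      then show ?thesis using a[of "{P T5 i, P AP j}"] b[of "{P U5 i, P AM j}"] by simp
    qed
  qed simp
qed

lemma frag:
  assumes pm: "perfect_matching (pyrene_V n) (pyrene_E n) M" and j: "j < n"
    and c: "cutV M j \<or> cutR M j \<or> cutL M j"
  shows "(\<exists>c<6. loc c j \<subseteq> M) \<and> (cutV M (Suc j) \<or> cutR M (Suc j) \<or> cutL M (Suc j))"
proof -
  note d = cut_dich[OF pm j c]
  note o = one_T1[OF pm j] one_T2[OF pm j] one_T3[OF pm j] one_T4[OF pm j] one_T5[OF pm j] one_CP[OF pm j]
    one_U1[OF pm j] one_U2[OF pm j] one_U3[OF pm j] one_U4[OF pm j] one_U5[OF pm j] one_CM[OF pm j]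
    one_APS[OF pm j] one_AMS[OF pm j]
  have "cutV M (Suc j) \<or> cutR M (Suc j) \<or> cutL M (Suc j)"
    unfolding cutV_def cutR_def cutL_def nat.case using d o unfolding cutR_def by sat
  moreover have "\<exists>c<6. loc c j \<subseteq> M"
    apply (rule ex_loc) using d o unfolding cutR_def by sat
  ultimately show ?thesis by blast
qed

lemma c6: "(c::nat) < 6 \<Longrightarrow> c = 0 \<or> c = 1 \<or> c = 2 \<or> c = 3 \<or> c = 4 \<or> c = 5"
  by auto

lemma loc_simps:
  "loc 0 j = top0 j \<union> bot0 j" "loc 1 j = top0 j \<union> bot1 j" "loc 2 j = top1 j \<union> bot0 j" "loc 3 j = top1 j \<union> bot1 j"
  "loc 4 j = Rl j" "loc 5 j = Ll j" "loc (Suc 0) j = top0 j \<union> bot1 j"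
  by (simp_all add: loc_def)

lemmas locdefs = loc_simps Rl_def Ll_def top0_def top1_def bot0_def bot1_def

lemma loc_cases: assumes "c < 6" "e \<in> loc c j"
  shows "(c = 0 \<or> c = 1) \<and> e = {P T1 j, P CP j} \<or> (c = 0 \<or> c = 1 \<or> c = 4) \<and> e = {P T2 j, P T3 j}
   \<or> (c = 0 \<or> c = 1 \<or> c = 4) \<and> e = {P T4 j, P T5 j} \<or> (c = 0 \<or> c = 2) \<and> e = {P U1 j, P CM j}
   \<or> (c = 0 \<or> c = 2 \<or> c = 4) \<and> e = {P U2 j, P U3 j} \<or> (c = 0 \<or> c = 2 \<or> c = 4) \<and> e = {P U4 j, P U5 j}
   \<or> (c = 2 \<or> c = 3) \<and> e = {P CP j, P T5 j} \<or> (c = 2 \<or> c = 3 \<or> c = 5) \<and> e = {P T1 j, P T2 j}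
   \<or> (c = 2 \<or> c = 3 \<or> c = 5) \<and> e = {P T3 j, P T4 j} \<or> (c = 1 \<or> c = 3) \<and> e = {P CM j, P U5 j}
   \<or> (c = 1 \<or> c = 3 \<or> c = 5) \<and> e = {P U1 j, P U2 j} \<or> (c = 1 \<or> c = 3 \<or> c = 5) \<and> e = {P U3 j, P U4 j}
   \<or> c = 4 \<and> e = {P AP j, P T1 j} \<or> (c = 4 \<or> c = 5) \<and> e = {P CP j, P CM j} \<or> c = 4 \<and> e = {P AM j, P U1 j}
   \<or> c = 5 \<and> e = {P T5 j, P AP (Suc j)} \<or> c = 5 \<and> e = {P U5 j, P AM (Suc j)}"
  using c6[OF assms(1)] assms(2)
  apply (elim disjE)
  apply (simp only: locdefs Un_iff insert_iff empty_iff; elim disjE; simp)+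
  done

lemma loc_sub_frag: "c < 6 \<Longrightarrow> loc c j \<subseteq> frag_edges j"
proof
  fix e assume "c < 6" "e \<in> loc c j"
  from loc_cases[OF this] show "e \<in> frag_edges j" unfolding frag_edges_def
    by (elim disjE conjE; simp)
qed

lemma loc_verts: assumes "c < 6" "e \<in> loc c j" "v \<in> e"
  shows "(\<exists>X. X \<noteq> AP \<and> X \<noteq> AM \<and> v = P X j) \<or> (c = 4 \<and> (v = P AP j \<or> v = P AM j)) \<or> (c = 5 \<and> (v = P AP (Suc j) \<or> v = P AM (Suc j)))"
  using loc_cases[OF assms(1,2)] assms(3) by (elim disjE conjE; auto)

lemma loc_int: assumes "c < 6" "e \<in> loc c j"
  shows "\<exists>X. X \<noteq> AP \<and> X \<noteq> AM \<and> P X j \<in> e"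
  using loc_cases[OF assms(1,2)] by (elim disjE conjE; auto)

lemma loc_disj: assumes "c < 6" "e1 \<in> loc c j" "e2 \<in> loc c j" "v \<in> e1" "v \<in> e2"
  shows "e1 = e2"
  using c6[OF assms(1)] assms(2-5)
  apply (elim disjE)
  apply (simp only: locdefs Un_iff insert_iff empty_iff; elim disjE; auto)+
  done

lemma loc_cover: assumes "c < 6" "X \<noteq> AP" "X \<noteq> AM"
  shows "\<exists>e\<in>loc c j. P X j \<in> e"
  using c6[OF assms(1)] assms(2,3)
  apply (elim disjE)
  apply (cases X; simp add: locdefs; fail)+
  done

definition cutset :: "nat list \<Rightarrow> (int \<times> int) set set" where
  "cutset cs = {{P AP k, P AM k} | k. k \<le> length cs \<and> 0 < length cs \<and> (k = 0 \<or> cs ! (k - 1) \<noteq> 5) \<and> (k = length cs \<or> cs ! k \<noteq> 4)}"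

definition Phi :: "nat list \<Rightarrow> (int \<times> int) set set" where
  "Phi cs = (\<Union>j<length cs. loc (cs ! j) j) \<union> cutset cs"

definition valid :: "nat list \<Rightarrow> bool" where
  "valid cs \<longleftrightarrow> (\<forall>x\<in>set cs. x < 6) \<and> (\<forall>j. Suc j < length cs \<longrightarrow> \<not> (cs ! j = 5 \<and> cs ! Suc j = 4))"

lemma valid_lt: "valid cs \<Longrightarrow> j < length cs \<Longrightarrow> cs ! j < 6"
  unfolding valid_def using nth_mem by blast

lemma valid_LR: "valid cs \<Longrightarrow> Suc j < length cs \<Longrightarrow> cs ! j = 5 \<Longrightarrow> cs ! Suc j = 4 \<Longrightarrow> False"
  unfolding valid_def by blast

lemma frag_sub_E: "j < n \<Longrightarrow> frag_edges j \<subseteq> pyrene_E n"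
  unfolding E_eq by blast

lemma Phi_sub_E: assumes "valid cs" "length cs = n" shows "Phi cs \<subseteq> pyrene_E n"
proof
  fix e assume "e \<in> Phi cs"
  then consider (l) j where "j < n" "e \<in> loc (cs ! j) j" | (c) k where "e = {P AP k, P AM k}" "k \<le> n" "0 < n"
    unfolding Phi_def cutset_def using assms(2) by blast
  then show "e \<in> pyrene_E n"
  proof cases
    case l
    then show ?thesis using loc_sub_frag[OF valid_lt[OF assms(1)]] frag_sub_E assms(2) by blast
  next
    case c
    show ?thesis
    proof (cases "k < n")
      case True
      then show ?thesis using c(1) frag_sub_E[OF True] unfolding frag_edges_def by blast
    next
      case False
      then have "k = Suc (n - 1)" "n - 1 < n" using c by auto
      then show ?thesis using c(1) frag_sub_E[of "n - 1" n] unfolding frag_edges_def by auto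
    qed
  qed
qed

lemma loc_Phi: "j < length cs \<Longrightarrow> loc (cs ! j) j \<subseteq> Phi cs"
  unfolding Phi_def by blast

lemma cut_Phi: "k \<le> length cs \<Longrightarrow> 0 < length cs \<Longrightarrow> (k = 0 \<or> cs ! (k - 1) \<noteq> 5) \<Longrightarrow> (k = length cs \<or> cs ! k \<noteq> 4)
   \<Longrightarrow> {P AP k, P AM k} \<in> Phi cs"
  unfolding Phi_def cutset_def by blast

lemma cover_cut:
  assumes "valid cs" "length cs = n" "k \<le> n" "0 < n"
  shows "(\<exists>e\<in>Phi cs. P AP k \<in> e) \<and> (\<exists>e\<in>Phi cs. P AM k \<in> e)"
proof (cases "k < n \<and> cs ! k = 4")
  case True
  then have "Rl k \<subseteq> Phi cs" using loc_Phi[of k cs] assms(2) by (simp add: loc_def)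
  then show ?thesis unfolding Rl_def by auto
next
  case F1: False
  show ?thesis
  proof (cases "\<exists>i. k = Suc i \<and> cs ! i = 5")
    case True
    then obtain i where i: "k = Suc i" "cs ! i = 5" by blast
    then have "Ll i \<subseteq> Phi cs" using loc_Phi[of i cs] assms(2,3) by (simp add: loc_def)
    then show ?thesis unfolding Ll_def i(1) by auto
  next
    case False
    then have "k = 0 \<or> cs ! (k - 1) \<noteq> 5" by (cases k) auto
    moreover have "k = length cs \<or> cs ! k \<noteq> 4" using F1 assms(2,3) by auto
    ultimately have "{P AP k, P AM k} \<in> Phi cs" using cut_Phi assms by auto
    then show ?thesis by auto
  qed
qed

lemma Phi_cover:
  assumes "valid cs" "length cs = n" "v \<in> pyrene_V n"
  shows "\<exists>e\<in>Phi cs. v \<in> e"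
proof -
  obtain i where i: "i < n" "v \<in> frag_verts i" using assms(3) unfolding V_eq by blast
  have c: "cs ! i < 6" using valid_lt[OF assms(1)] i(1) assms(2) by simp
  have "(\<exists>X. X \<noteq> AP \<and> X \<noteq> AM \<and> v = P X i) \<or> v = P AP i \<or> v = P AM i \<or> v = P AP (Suc i) \<or> v = P AM (Suc i)"
    using i(2) unfolding frag_verts_def by auto
  then show ?thesis
  proof (elim disjE exE conjE)
    fix X assume "X \<noteq> AP" "X \<noteq> AM" "v = P X i"
    then show ?thesis using loc_cover[OF c, of X i] loc_Phi[of i cs] i(1) assms(2) by blast
  qed (use cover_cut[OF assms(1,2), of i] cover_cut[OF assms(1,2), of "Suc i"] i(1) in auto)
qed

lemma Phi_uniq:
  assumes "valid cs" "e1 \<in> Phi cs" "e2 \<in> Phi cs" "v \<in> e1" "v \<in> e2"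
  shows "e1 = e2"
proof -
  have A: "x = y" if "x \<in> loc (cs ! i) i" "i < length cs" "y \<in> loc (cs ! i') i'" "i' < length cs"
     "v \<in> x" "v \<in> y" for x y i i'
  proof (cases "i = i'")
    case True
    then show ?thesis using loc_disj[OF valid_lt[OF assms(1) that(2)]] that by blast
  next
    case False
    note a = loc_verts[OF valid_lt[OF assms(1) that(2)] that(1,5)]
    note b = loc_verts[OF valid_lt[OF assms(1) that(4)] that(3,6)]
    have x: False if "Suc j < length cs" "cs ! j = 5" "cs ! Suc j = 4" for j
      using valid_LR[OF assms(1) that] .
    from a b False show ?thesis using x[of i] x[of i'] that(2,4) by auto
  qed
  have B: False if "x \<in> loc (cs ! i) i" "i < length cs" "y = {P AP k, P AM k}"
     "(k = 0 \<or> cs ! (k - 1) \<noteq> 5)" "(k = length cs \<or> cs ! k \<noteq> 4)" "v \<in> x" "v \<in> y" for x y i k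
  proof -
    note a = loc_verts[OF valid_lt[OF assms(1) that(2)] that(1,6)]
    from that(7,3) have "v = P AP k \<or> v = P AM k" by auto
    with a that(2,4,5) show False by auto
  qed
  have C: "x = y" if "x = {P AP k, P AM k}" "y = {P AP k', P AM k'}" "v \<in> x" "v \<in> y" for x y k k'
    using that by auto
  from assms(2,3) show ?thesis unfolding Phi_def cutset_def
    using A[where x=e1 and y=e2] A[where x=e2 and y=e1] B[where x=e1 and y=e2] B[where x=e2 and y=e1] C[where x=e1 and y=e2] assms(4,5) by blast
qed

lemma Phi_PM:
  assumes "valid cs" "length cs = n"
  shows "perfect_matching (pyrene_V n) (pyrene_E n) (Phi cs)"
  unfolding perfect_matching_def
proof (intro conjI ballI)
  show "Phi cs \<subseteq> pyrene_E n" using Phi_sub_E[OF assms] .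
  fix v assume v: "v \<in> pyrene_V n"
  obtain e where "e \<in> Phi cs" "v \<in> e" using Phi_cover[OF assms v] by blast
  then show "\<exists>!e. e \<in> Phi cs \<and> v \<in> e"
    using Phi_uniq[OF assms(1)] by (intro ex1I[of _ e]) blast+
qed

definition "EX2 a b \<longleftrightarrow> (a \<and> \<not> b) \<or> (\<not> a \<and> b)"
definition "EX3 a b c \<longleftrightarrow> (a \<and> \<not> b \<and> \<not> c) \<or> (\<not> a \<and> b \<and> \<not> c) \<or> (\<not> a \<and> \<not> b \<and> c)"

lemma loc_atoms:
  "loc 0 j \<subseteq> M \<longleftrightarrow> {P T1 j, P CP j} \<in> M \<and> {P T2 j, P T3 j} \<in> M \<and> {P T4 j, P T5 j} \<in> M \<and> {P U1 j, P CM j} \<in> M \<and> {P U2 j, P U3 j} \<in> M \<and> {P U4 j, P U5 j} \<in> M"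
  "loc 1 j \<subseteq> M \<longleftrightarrow> {P T1 j, P CP j} \<in> M \<and> {P T2 j, P T3 j} \<in> M \<and> {P T4 j, P T5 j} \<in> M \<and> {P CM j, P U5 j} \<in> M \<and> {P U1 j, P U2 j} \<in> M \<and> {P U3 j, P U4 j} \<in> M"
  "loc 2 j \<subseteq> M \<longleftrightarrow> {P CP j, P T5 j} \<in> M \<and> {P T1 j, P T2 j} \<in> M \<and> {P T3 j, P T4 j} \<in> M \<and> {P U1 j, P CM j} \<in> M \<and> {P U2 j, P U3 j} \<in> M \<and> {P U4 j, P U5 j} \<in> M"
  "loc 3 j \<subseteq> M \<longleftrightarrow> {P CP j, P T5 j} \<in> M \<and> {P T1 j, P T2 j} \<in> M \<and> {P T3 j, P T4 j} \<in> M \<and> {P CM j, P U5 j} \<in> M \<and> {P U1 j, P U2 j} \<in> M \<and> {P U3 j, P U4 j} \<in> M"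
  "loc 4 j \<subseteq> M \<longleftrightarrow> {P AP j, P T1 j} \<in> M \<and> {P T2 j, P T3 j} \<in> M \<and> {P T4 j, P T5 j} \<in> M \<and> {P CP j, P CM j} \<in> M \<and> {P AM j, P U1 j} \<in> M \<and> {P U2 j, P U3 j} \<in> M \<and> {P U4 j, P U5 j} \<in> M"
  "loc 5 j \<subseteq> M \<longleftrightarrow> {P T5 j, P AP (Suc j)} \<in> M \<and> {P T1 j, P T2 j} \<in> M \<and> {P T3 j, P T4 j} \<in> M \<and> {P CP j, P CM j} \<in> M \<and> {P U5 j, P AM (Suc j)} \<in> M \<and> {P U1 j, P U2 j} \<in> M \<and> {P U3 j, P U4 j} \<in> M"
  by (auto simp: locdefs)

lemma loc_uniq:
  assumes pm: "perfect_matching (pyrene_V n) (pyrene_E n) M" and j: "j < n"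
    and c: "c < 6" "c' < 6" and s: "loc c j \<subseteq> M" "loc c' j \<subseteq> M"
  shows "c = c'"
proof -
  note o = one_T1[OF pm j] one_T2[OF pm j] one_T3[OF pm j] one_T4[OF pm j] one_T5[OF pm j] one_CP[OF pm j]
    one_U1[OF pm j] one_U2[OF pm j] one_U3[OF pm j] one_U4[OF pm j] one_U5[OF pm j] one_CM[OF pm j]
  note o' = o[folded EX2_def EX3_def]
  show ?thesis using c6[OF c(1)] c6[OF c(2)] s o'
    apply (elim disjE)
    apply (simp_all only: loc_atoms EX2_def EX3_def)
    apply sat+
    done
qed

lemma locR:
  assumes pm: "perfect_matching (pyrene_V n) (pyrene_E n) M" and j: "j < n"
    and c: "c < 6" and s: "loc c j \<subseteq> M" and e: "{P AP j, P T1 j} \<in> M"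
  shows "c = 4"
proof -
  note o = one_T1[OF pm j]
  note o' = o[folded EX2_def EX3_def]
  show ?thesis using c6[OF c(1)] s o' e
    apply (elim disjE)
    apply (simp_all only: loc_atoms EX2_def EX3_def)
    apply sat+
    done
qed

lemma locL:
  assumes pm: "perfect_matching (pyrene_V n) (pyrene_E n) M" and j: "j < n"
    and c: "c < 6" and s: "loc c j \<subseteq> M" and e: "{P T5 j, P AP (Suc j)} \<in> M"
  shows "c = 5"
proof -
  note o = one_T5[OF pm j]
  note o' = o[folded EX2_def EX3_def]
  show ?thesis using c6[OF c(1)] s o' e
    apply (elim disjE)
    apply (simp_all only: loc_atoms EX2_def EX3_def)
    apply sat+
    done
qed

lemma cuts_ok:
  assumes pm: "perfect_matching (pyrene_V n) (pyrene_E n) M" and n: "0 < n"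
  shows "k \<le> n \<Longrightarrow> cutV M k \<or> cutR M k \<or> cutL M k"
proof (induction k)
  case 0
  show ?case using one_AP0[OF pm n] one_AM0[OF pm n] unfolding cutV_def cutR_def by sat
next
  case (Suc k)
  then show ?case using frag[OF pm, of k] by simp
qed

lemma locs_ex:
  assumes pm: "perfect_matching (pyrene_V n) (pyrene_E n) M" and j: "j < n"
  shows "\<exists>c<6. loc c j \<subseteq> M"
  using frag[OF pm j cuts_ok[OF pm _ ]] j by simp

definition code_of :: "nat \<Rightarrow> (int \<times> int) set set \<Rightarrow> nat list" where
  "code_of n M = map (\<lambda>j. SOME c. c < 6 \<and> loc c j \<subseteq> M) [0..<n]"

lemma code_of:
  assumes pm: "perfect_matching (pyrene_V n) (pyrene_E n) M" and j: "j < n"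
  shows "code_of n M ! j < 6" "loc (code_of n M ! j) j \<subseteq> M"
proof -
  have "(SOME c. c < 6 \<and> loc c j \<subseteq> M) < 6 \<and> loc (SOME c. c < 6 \<and> loc c j \<subseteq> M) j \<subseteq> M"
    using someI_ex[OF locs_ex[OF pm j]] by blast
  then show "code_of n M ! j < 6" "loc (code_of n M ! j) j \<subseteq> M" unfolding code_of_def using j by simp_all
qed

lemma length_code_of[simp]: "length (code_of n M) = n"
  unfolding code_of_def by simp

lemma code_valid:
  assumes pm: "perfect_matching (pyrene_V n) (pyrene_E n) M"
  shows "valid (code_of n M)"
  unfolding valid_def
proof (intro conjI allI impI ballI notI)
  fix x assume "x \<in> set (code_of n M)"
  then obtain j where "j < n" "x = code_of n M ! j" by (auto simp: in_set_conv_nth)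
  then show "x < 6" using code_of(1)[OF pm] by simp
next
  fix j assume j: "Suc j < length (code_of n M)" and h: "code_of n M ! j = 5 \<and> code_of n M ! Suc j = 4"
  then have "Ll j \<subseteq> M" "Rl (Suc j) \<subseteq> M" using code_of(2)[OF pm, of j] code_of(2)[OF pm, of "Suc j"]
    by (simp_all add: loc_def)
  then have "{P T5 j, P AP (Suc j)} \<in> M" "{P AP (Suc j), P T1 (Suc j)} \<in> M" unfolding Ll_def Rl_def by auto
  then show False using one_APS[OF pm, of j] j by simp
qed

lemma edge_not_E: "{P AP n, P T1 n} \<notin> pyrene_E n"
proof
  assume "{P AP n, P T1 n} \<in> pyrene_E n"
  then obtain i where "i < n" "{P AP n, P T1 n} \<in> frag_edges i" unfolding E_eq by blast
  then show False unfolding frag_edges_def by auto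
qed

lemma Phi_code_sub:
  assumes pm: "perfect_matching (pyrene_V n) (pyrene_E n) M"
  shows "Phi (code_of n M) \<subseteq> M"
proof
  fix e assume "e \<in> Phi (code_of n M)"
  then consider (l) j where "j < n" "e \<in> loc (code_of n M ! j) j"
    | (c) k where "e = {P AP k, P AM k}" "k \<le> n" "0 < n" "k = 0 \<or> code_of n M ! (k - 1) \<noteq> 5"
        "k = n \<or> code_of n M ! k \<noteq> 4"
    unfolding Phi_def cutset_def by auto
  then show "e \<in> M"
  proof cases
    case l
    then show ?thesis using code_of(2)[OF pm] by blast
  next
    case c
    have "cutV M k \<or> cutR M k \<or> cutL M k" using cuts_ok[OF pm c(3) c(2)] .
    then show ?thesis
    proof (elim disjE)
      assume "cutV M k" then show ?thesis using c(1) unfolding cutV_def by simp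
    next
      assume r: "cutR M k"
      show ?thesis
      proof (cases "k = n")
        case True
        then show ?thesis using r edge_not_E[of n] pm unfolding cutR_def perfect_matching_def by blast
      next
        case False
        then have "k < n" using c(2) by simp
        then have "code_of n M ! k = 4" using locR[OF pm _ code_of[OF pm]] r unfolding cutR_def by blast
        then show ?thesis using c(5) False by simp
      qed
    next
      assume "cutL M k"
      then obtain i where i: "k = Suc i" "{P T5 i, P AP (Suc i)} \<in> M" unfolding cutL_def by (cases k) auto
      then have "code_of n M ! i = 5" using locL[OF pm _ code_of[OF pm]] c(2) by simp
      then show ?thesis using c(4) i by simp
    qed
  qed
qed

lemma frag_edge_V: "e \<in> frag_edges i \<Longrightarrow> e \<subseteq> frag_verts i \<and> e \<noteq> {}"
  unfolding frag_edges_def frag_verts_def by auto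

lemma E_has_V: assumes "e \<in> pyrene_E n" shows "\<exists>v\<in>e. v \<in> pyrene_V n"
proof -
  obtain i where i: "i < n" "e \<in> frag_edges i" using assms unfolding E_eq by blast
  then have "e \<subseteq> frag_verts i" "e \<noteq> {}" using frag_edge_V by blast+
  then obtain v where "v \<in> e" "v \<in> frag_verts i" by blast
  then show ?thesis using i(1) unfolding V_eq by blast
qed

lemma PM_sub_eq:
  assumes "perfect_matching (pyrene_V n) (pyrene_E n) M" "perfect_matching (pyrene_V n) (pyrene_E n) M'" "M' \<subseteq> M"
  shows "M = M'"
proof
  show "M \<subseteq> M'"
  proof
    fix e assume e: "e \<in> M"
    then have "e \<in> pyrene_E n" using assms(1) unfolding perfect_matching_def by blast
    then obtain v where v: "v \<in> e" "v \<in> pyrene_V n" using E_has_V by blast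
    then obtain e' where e': "e' \<in> M'" "v \<in> e'" using pm_ex[OF assms(2)] by blast
    then have "e' = e" using pm_uniq[OF assms(1) v(2) _ e] assms(3) v(1) by blast
    then show "e \<in> M'" using e' by simp
  qed
qed (rule assms(3))

lemma PM_is_Phi:
  assumes pm: "perfect_matching (pyrene_V n) (pyrene_E n) M"
  shows "M = Phi (code_of n M)"
  using PM_sub_eq[OF pm Phi_PM[OF code_valid[OF pm] length_code_of] Phi_code_sub[OF pm]] .

lemma Phi_inj:
  assumes "valid cs" "valid cs'" "length cs = n" "length cs' = n" "Phi cs = Phi cs'"
  shows "cs = cs'"
proof (rule nth_equalityI)
  show "length cs = length cs'" using assms by simp
  fix j assume "j < length cs"
  then have j: "j < n" using assms by simp
  note pm = Phi_PM[OF assms(1,3)]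
  have "loc (cs ! j) j \<subseteq> Phi cs" "loc (cs' ! j) j \<subseteq> Phi cs" using loc_Phi[of j cs] loc_Phi[of j cs'] j assms by auto
  then show "cs ! j = cs' ! j" using loc_uniq[OF pm j valid_lt[OF assms(1)] valid_lt[OF assms(2)]] j assms by auto
qed

definition nF :: "nat list \<Rightarrow> nat" where "nF cs = length (filter (\<lambda>x. x < 4) cs)"

definition mk :: "nat \<Rightarrow> nat \<Rightarrow> (int \<times> int) set set" where
  "mk c j = (if c = 4 then {{P AP j, P T1 j}} else if c = 5 then {{P T5 j, P AP (Suc j)}}
     else {(if c < 2 then {P T1 j, P CP j} else {P CP j, P T5 j}), (if c mod 2 = 0 then {P U1 j, P CM j} else {P CM j, P U5 j})})"

definition Sf :: "nat list \<Rightarrow> (int \<times> int) set set" where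
  "Sf cs = (\<Union>j<length cs. mk (cs ! j) j)"

lemma mk_atoms:
  "mk 0 j \<subseteq> M \<longleftrightarrow> {P T1 j, P CP j} \<in> M \<and> {P U1 j, P CM j} \<in> M"
  "mk 1 j \<subseteq> M \<longleftrightarrow> {P T1 j, P CP j} \<in> M \<and> {P CM j, P U5 j} \<in> M"
  "mk 2 j \<subseteq> M \<longleftrightarrow> {P CP j, P T5 j} \<in> M \<and> {P U1 j, P CM j} \<in> M"
  "mk 3 j \<subseteq> M \<longleftrightarrow> {P CP j, P T5 j} \<in> M \<and> {P CM j, P U5 j} \<in> M"
  "mk 4 j \<subseteq> M \<longleftrightarrow> {P AP j, P T1 j} \<in> M"
  "mk 5 j \<subseteq> M \<longleftrightarrow> {P T5 j, P AP (Suc j)} \<in> M"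
  by (simp_all add: mk_def)

lemma mk_sub_loc: assumes "c < 6" shows "mk c j \<subseteq> loc c j"
  using c6[OF assms] by (elim disjE) (simp_all add: mk_def locdefs)

lemma mk_det:
  assumes pm: "perfect_matching (pyrene_V n) (pyrene_E n) M" and j: "j < n"
    and c: "c < 6" "c' < 6" and s: "mk c j \<subseteq> M" "loc c' j \<subseteq> M"
  shows "c = c'"
proof -
  note o = one_T1[OF pm j] one_T5[OF pm j] one_CP[OF pm j] one_U1[OF pm j] one_U5[OF pm j] one_CM[OF pm j]
  note o' = o[folded EX2_def EX3_def]
  show ?thesis using c6[OF c(1)] c6[OF c(2)] s o'
    apply (elim disjE)
    apply (simp_all only: loc_atoms mk_atoms EX2_def EX3_def)
    apply sat+
    done
qed

lemma Sf_sub: "valid cs \<Longrightarrow> Sf cs \<subseteq> Phi cs"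
  unfolding Sf_def using mk_sub_loc loc_Phi valid_lt by blast

lemma Sf_forcing:
  assumes v: "valid cs" and l: "length cs = n"
  shows "forcing_set (pyrene_V n) (pyrene_E n) (Phi cs) (Sf cs)"
  unfolding forcing_set_def
proof (intro conjI allI impI)
  show "Sf cs \<subseteq> Phi cs" using Sf_sub[OF v] .
  fix M' assume h: "perfect_matching (pyrene_V n) (pyrene_E n) M' \<and> Sf cs \<subseteq> M'"
  then have pm: "perfect_matching (pyrene_V n) (pyrene_E n) M'" and s: "Sf cs \<subseteq> M'" by auto
  have "code_of n M' = cs"
  proof (rule nth_equalityI)
    show "length (code_of n M') = length cs" using l by simp
    fix j assume "j < length (code_of n M')"
    then have j: "j < n" by simp
    have "mk (cs ! j) j \<subseteq> M'" using s j l unfolding Sf_def by blast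
    then show "code_of n M' ! j = cs ! j"
      using mk_det[OF pm j valid_lt[OF v] code_of(1)[OF pm j] _ code_of(2)[OF pm j]] j l by auto
  qed
  then show "M' = Phi cs" using PM_is_Phi[OF pm] by simp
qed

lemma card_mk: "c < 6 \<Longrightarrow> card (mk c j) \<le> (if c < 4 then 2 else 1)"
  unfolding mk_def by (auto simp: card_insert_if)

lemma sum_21: "(\<Sum>j<length cs. if cs ! j < 4 then 2 else 1) = length cs + nF cs"
proof -
  have "(\<Sum>j<length cs. (if cs ! j < 4 then 2 else 1)::nat) = (\<Sum>j<length cs. 1 + (if cs ! j < 4 then 1 else 0))"
    by (rule sum.cong) auto
  also have "\<dots> = length cs + (\<Sum>j<length cs. (if cs ! j < 4 then 1 else 0))"
    by (simp only: sum.distrib) simp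
  also have "(\<Sum>j<length cs. (if cs ! j < 4 then 1 else 0)) = card ({..<length cs} \<inter> {j. cs ! j < 4})"
    by (simp add: sum.If_cases)
  also have "{..<length cs} \<inter> {j. cs ! j < 4} = {j. j < length cs \<and> cs ! j < 4}" by auto
  finally show ?thesis unfolding nF_def length_filter_conv_card by simp
qed

lemma card_Sf: "valid cs \<Longrightarrow> card (Sf cs) \<le> length cs + nF cs"
proof -
  assume "valid cs"
  have "card (Sf cs) \<le> (\<Sum>j<length cs. card (mk (cs ! j) j))"
    unfolding Sf_def by (rule card_UN_le) simp
  also have "\<dots> \<le> (\<Sum>j<length cs. if cs ! j < 4 then 2 else 1)"
    by (rule sum_mono) (rule card_mk, simp add: valid_lt \<open>valid cs\<close>)
  finally show ?thesis using sum_21 by simp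
qed

lemma lb:
  assumes fin: "finite S" and fs: "forcing_set V E M S" and finK: "finite K"
    and disj: "\<And>k k'. k \<in> K \<Longrightarrow> k' \<in> K \<Longrightarrow> k \<noteq> k' \<Longrightarrow> D k \<inter> D k' = {}"
    and alt: "\<And>k. k \<in> K \<Longrightarrow> \<exists>M'. perfect_matching V E M' \<and> M' \<noteq> M \<and> M - D k \<subseteq> M'"
  shows "card K \<le> card S"
proof -
  have SM: "S \<subseteq> M" using fs unfolding forcing_set_def by (rule conjunct1)
  have fo: "M' = M" if "perfect_matching V E M'" "S \<subseteq> M'" for M'
    using fs that unfolding forcing_set_def by blast
  have ne: "S \<inter> D k \<noteq> {}" if k: "k \<in> K" for k
  proof
    assume "S \<inter> D k = {}"
    then have "S \<subseteq> M - D k" using SM by blast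
    obtain M' where M': "perfect_matching V E M'" "M' \<noteq> M" "M - D k \<subseteq> M'" using alt[OF k] by blast
    have "S \<subseteq> M'" using \<open>S \<subseteq> M - D k\<close> M'(3) by (rule subset_trans)
    then have "M' = M" by (rule fo[OF M'(1)])
    then show False using M'(2) by simp
  qed
  define f where "f k = (SOME x. x \<in> S \<inter> D k)" for k
  have f: "f k \<in> S \<inter> D k" if "k \<in> K" for k
    unfolding f_def by (rule someI_ex) (use ne[OF that] in blast)
  have "inj_on f K"
  proof (rule inj_onI)
    fix k k' assume "k \<in> K" "k' \<in> K" "f k = f k'"
    show "k = k'"
    proof (rule ccontr)
      assume "k \<noteq> k'"
      then have "D k \<inter> D k' = {}" using disj \<open>k \<in> K\<close> \<open>k' \<in> K\<close> by blast
      moreover have "f k \<in> D k" "f k' \<in> D k'" using f \<open>k \<in> K\<close> \<open>k' \<in> K\<close> by blast+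
      ultimately show False using \<open>f k = f k'\<close> by auto
    qed
  qed
  moreover have "f ` K \<subseteq> S" using f by blast
  ultimately show ?thesis using card_inj_on_le fin by blast
qed

definition flip :: "nat \<Rightarrow> nat \<Rightarrow> nat" where
  "flip c b = (if b = 0 then (if c < 4 then (c + 2) mod 4 else if c = 4 then 0 else 3)
     else (if c mod 2 = 0 then c + 1 else c - 1))"

definition Dd :: "nat \<Rightarrow> nat \<Rightarrow> nat \<Rightarrow> (int \<times> int) set set" where
  "Dd c b j = (if b = 0 then (if c < 2 then top0 j else if c < 4 then top1 j
      else if c = 4 then {{P AP j, P T1 j}, {P CP j, P CM j}, {P AM j, P U1 j}}
      else {{P T5 j, P AP (Suc j)}, {P CP j, P CM j}, {P U5 j, P AM (Suc j)}})
    else (if c mod 2 = 0 then bot0 j else bot1 j))"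

lemma flip_ok:
  assumes "c < 6" "b = 0 \<or> (b = 1 \<and> c < 4)"
  shows "flip c b < 4 \<and> flip c b \<noteq> c \<and> Dd c b j \<subseteq> loc c j \<and> loc c j - Dd c b j \<subseteq> loc (flip c b) j"
  using c6[OF assms(1)] assms(2)
  apply (elim disjE conjE)
  apply (simp_all add: flip_def Dd_def loc_def Rl_def Ll_def top0_def top1_def bot0_def bot1_def)
  apply auto
  done

lemma valid_upd: assumes "valid cs" "c' < 4" shows "valid (cs[j := c'])"
  unfolding valid_def
proof (intro conjI ballI allI impI notI)
  fix x assume "x \<in> set (cs[j := c'])"
  then have "x \<in> insert c' (set cs)" using set_update_subset_insert by fast
  then show "x < 6" using assms unfolding valid_def by auto
next
  fix i assume i: "Suc i < length (cs[j := c'])" and h: "cs[j := c'] ! i = 5 \<and> cs[j := c'] ! Suc i = 4"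
  have "i \<noteq> j" using h i assms(2) by (auto simp: nth_list_update)
  moreover have "Suc i \<noteq> j" using h i assms(2) by (auto simp: nth_list_update)
  ultimately have "cs ! i = 5" "cs ! Suc i = 4" using h i by (auto simp: nth_list_update)
  then show False using valid_LR[OF assms(1), of i] i by simp
qed

lemma Phi_upd:
  assumes v: "valid cs" and j: "j < length cs" and c': "c' < 4"
  shows "Phi cs - loc (cs ! j) j \<subseteq> Phi (cs[j := c'])"
proof
  fix e assume e: "e \<in> Phi cs - loc (cs ! j) j"
  then consider (l) i where "i < length cs" "e \<in> loc (cs ! i) i" "i \<noteq> j"
    | (c) k where "e = {P AP k, P AM k}" "k \<le> length cs" "0 < length cs" "k = 0 \<or> cs ! (k - 1) \<noteq> 5"
        "k = length cs \<or> cs ! k \<noteq> 4"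
    unfolding Phi_def cutset_def by auto
  then show "e \<in> Phi (cs[j := c'])"
  proof cases
    case l
    then show ?thesis using loc_Phi[of i "cs[j := c']"] by auto
  next
    case c
    have "k = 0 \<or> cs[j := c'] ! (k - 1) \<noteq> 5" using c(4) c' j by (cases "k - 1 = j") auto
    moreover have "k = length cs \<or> cs[j := c'] ! k \<noteq> 4" using c(5) c' j by (cases "k = j") auto
    ultimately show ?thesis using cut_Phi[of k "cs[j := c']"] c by auto
  qed
qed

lemma loc_disj2:
  assumes "c < 6" "c' < 6" "j \<noteq> j'" shows "loc c j \<inter> loc c' j' = {}"
proof (rule ccontr)
  assume "loc c j \<inter> loc c' j' \<noteq> {}"
  then obtain e where e: "e \<in> loc c j" "e \<in> loc c' j'" by blast
  obtain X where X: "X \<noteq> AP" "X \<noteq> AM" "P X j \<in> e" using loc_int[OF assms(1) e(1)] by blast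
  show False using loc_verts[OF assms(2) e(2) X(3)] X assms(3) by auto
qed

lemma finite_loc: "finite (loc c j)"
  by (simp add: loc_def Rl_def Ll_def top0_def top1_def bot0_def bot1_def)

lemma finite_Phi: "finite (Phi cs)"
proof -
  have "cutset cs \<subseteq> (\<lambda>k. {P AP k, P AM k}) ` {..length cs}" unfolding cutset_def by auto
  then have "finite (cutset cs)" by (rule finite_subset) simp
  then show ?thesis unfolding Phi_def using finite_loc by simp
qed

lemma lower:
  assumes v: "valid cs" and l: "length cs = n"
    and fs: "forcing_set (pyrene_V n) (pyrene_E n) (Phi cs) S"
  shows "n + nF cs \<le> card S"
proof -
  define K where "K = {..<n} \<times> {0::nat} \<union> {j. j < n \<and> cs ! j < 4} \<times> {1}"
  define D where "D k = Dd (cs ! fst k) (snd k) (fst k)" for k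
  have cK: "card K = n + nF cs"
  proof -
    have "card K = card ({..<n} \<times> {0::nat}) + card ({j. j < n \<and> cs ! j < 4} \<times> {1::nat})"
      unfolding K_def by (rule card_Un_disjoint) auto
    also have "\<dots> = n + card {j. j < n \<and> cs ! j < 4}" by (simp add: card_cartesian_product)
    finally show ?thesis unfolding nF_def length_filter_conv_card l .
  qed
  have finS: "finite S" using fs finite_Phi[of cs] unfolding forcing_set_def by (blast intro: finite_subset)
  have Kb: "fst k < n \<and> cs ! fst k < 6 \<and> (snd k = 0 \<or> (snd k = 1 \<and> cs ! fst k < 4))" if "k \<in> K" for k
    using that valid_lt[OF v] l unfolding K_def by auto
  have "card K \<le> card S"
  proof (rule lb[OF finS fs])
    show "finite K" unfolding K_def by auto
  next
    fix k k' assume k: "k \<in> K" "k' \<in> K" "k \<noteq> k'"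
    obtain j b j' b' where kk: "k = (j, b)" "k' = (j', b')" by (cases k, cases k')
    note a = Kb[OF k(1)] Kb[OF k(2)]
    show "D k \<inter> D k' = {}"
    proof (cases "j = j'")
      case False
      have "D k \<subseteq> loc (cs ! j) j" "D k' \<subseteq> loc (cs ! j') j'"
        using flip_ok[of "cs ! j" b j] flip_ok[of "cs ! j'" b' j'] a kk unfolding D_def by auto
      then show ?thesis using loc_disj2[of "cs ! j" "cs ! j'" j j'] a kk False by auto
    next
      case True
      then have "b \<noteq> b'" using k(3) kk by simp
      then have "{b, b'} = {0, 1}" "cs ! j < 4" using a kk True by auto
      then show ?thesis unfolding D_def kk True
        by (auto simp: Dd_def top0_def top1_def bot0_def bot1_def doubleton_eq_iff)
    qed
  next
    fix k assume k: "k \<in> K"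
    obtain j b where kk: "k = (j, b)" by (cases k)
    note a = Kb[OF k, unfolded kk fst_conv snd_conv]
    define c' where "c' = flip (cs ! j) b"
    note fo = flip_ok[of "cs ! j" b j, folded c'_def]
    have c'4: "c' < 4" "c' \<noteq> cs ! j" using fo a by auto
    define cs' where "cs' = cs[j := c']"
    have v': "valid cs'" "length cs' = n" unfolding cs'_def using valid_upd[OF v c'4(1)] l by auto
    have "Phi cs' \<noteq> Phi cs"
    proof
      assume "Phi cs' = Phi cs"
      then have "cs' = cs" using Phi_inj[OF v'(1) v v'(2) l] by simp
      then show False using c'4(2) a unfolding cs'_def
        by (metis l nth_list_update_eq)
    qed
    moreover have "Phi cs - D k \<subseteq> Phi cs'"
    proof
      fix e assume e: "e \<in> Phi cs - D k"
      show "e \<in> Phi cs'"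
      proof (cases "e \<in> loc (cs ! j) j")
        case True
        then have "e \<in> loc c' j" using fo a e unfolding D_def kk by auto
        moreover have "loc (cs' ! j) j \<subseteq> Phi cs'" using loc_Phi[of j cs'] a v'(2) by simp
        ultimately show ?thesis unfolding cs'_def using a l by auto
      next
        case False
        then show ?thesis using Phi_upd[OF v _ c'4(1), of j] a l e unfolding cs'_def by auto
      qed
    qed
    ultimately show "\<exists>M'. perfect_matching (pyrene_V n) (pyrene_E n) M' \<and> M' \<noteq> Phi cs \<and> Phi cs - D k \<subseteq> M'"
      using Phi_PM[OF v'] by blast
  qed
  then show ?thesis using cK by simp
qed

definition codes :: "nat \<Rightarrow> nat list set" where "codes n = {cs. length cs = n \<and> valid cs}"
definition Xs :: "nat \<Rightarrow> nat list set" where "Xs n = {cs \<in> codes n. cs = [] \<or> hd cs \<noteq> 4}"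
definition Ys :: "nat \<Rightarrow> nat list set" where "Ys n = {cs \<in> codes n. cs \<noteq> [] \<and> hd cs = 4}"

lemma valid_Nil: "valid []" unfolding valid_def by simp

lemma valid_Cons: "valid (x # xs) \<longleftrightarrow> x < 6 \<and> valid xs \<and> \<not> (x = 5 \<and> xs \<noteq> [] \<and> hd xs = 4)"
proof
  assume v: "valid (x # xs)"
  have "x < 6" using v unfolding valid_def by simp
  moreover have "valid xs" unfolding valid_def
  proof (intro conjI allI impI ballI)
    fix y assume "y \<in> set xs" then show "y < 6" using v unfolding valid_def by simp
  next
    fix j assume "Suc j < length xs"
    then show "\<not> (xs ! j = 5 \<and> xs ! Suc j = 4)" using valid_LR[OF v, of "Suc j"] by auto
  qed
  moreover have "\<not> (x = 5 \<and> xs \<noteq> [] \<and> hd xs = 4)"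
  proof
    assume h: "x = 5 \<and> xs \<noteq> [] \<and> hd xs = 4"
    then show False using valid_LR[OF v, of 0] by (cases xs) auto
  qed
  ultimately show "x < 6 \<and> valid xs \<and> \<not> (x = 5 \<and> xs \<noteq> [] \<and> hd xs = 4)" by blast
next
  assume h: "x < 6 \<and> valid xs \<and> \<not> (x = 5 \<and> xs \<noteq> [] \<and> hd xs = 4)"
  show "valid (x # xs)" unfolding valid_def
  proof (intro conjI allI impI ballI notI)
    fix y assume "y \<in> set (x # xs)" then show "y < 6" using h unfolding valid_def by auto
  next
    fix j assume j: "Suc j < length (x # xs)" and c: "(x # xs) ! j = 5 \<and> (x # xs) ! Suc j = 4"
    show False
    proof (cases j)
      case 0
      then show False using h c j by (cases xs) auto
    next
      case (Suc i)
      then show False using h c j valid_LR[of xs i] by auto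
    qed
  qed
qed

lemma nF_Cons: "nF (x # xs) = (if x < 4 then 1 else 0) + nF xs"
  unfolding nF_def by simp

lemma codes_0: "codes 0 = {[]}" unfolding codes_def using valid_Nil by auto

lemma finite_codes: "finite (codes n)"
proof -
  have "codes n \<subseteq> {cs. set cs \<subseteq> {..<6} \<and> length cs = n}" unfolding codes_def valid_def by auto
  then show ?thesis by (rule finite_subset) (rule finite_lists_length_eq, simp)
qed

lemma codes_XY: "codes n = Xs n \<union> Ys n" "Xs n \<inter> Ys n = {}"
  unfolding Xs_def Ys_def by auto

lemma finite_XY: "finite (Xs n)" "finite (Ys n)"
  using finite_codes[of n] codes_XY(1)[of n] by auto

lemma Xs_Suc: "Xs (Suc n) = (\<lambda>(k, cs). k # cs) ` ({0, 1, 2, 3} \<times> codes n) \<union> Cons 5 ` Xs n"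
proof (rule set_eqI)
  fix zs
  show "zs \<in> Xs (Suc n) \<longleftrightarrow> zs \<in> (\<lambda>(k, cs). k # cs) ` ({0, 1, 2, 3} \<times> codes n) \<union> Cons 5 ` Xs n"
  proof (cases zs)
    case Nil then show ?thesis unfolding Xs_def codes_def by auto
  next
    case (Cons x xs)
    show ?thesis
    proof
      assume h: "zs \<in> Xs (Suc n)"
      then have hx: "x < 6" "valid xs" "length xs = n" "x \<noteq> 4" "\<not> (x = 5 \<and> xs \<noteq> [] \<and> hd xs = 4)"
        unfolding Cons Xs_def codes_def using valid_Cons[of x xs] by auto
      show "zs \<in> (\<lambda>(k, cs). k # cs) ` ({0, 1, 2, 3} \<times> codes n) \<union> Cons 5 ` Xs n"
      proof (cases "x = 5")
        case True
        then have "xs \<in> Xs n" using hx unfolding Xs_def codes_def by auto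
        then show ?thesis unfolding Cons True by blast
      next
        case False
        then have "x \<in> {0, 1, 2, 3}" using hx by auto
        moreover have "xs \<in> codes n" using hx unfolding codes_def by auto
        ultimately have "(x, xs) \<in> {0, 1, 2, 3} \<times> codes n" by blast
        then have "(\<lambda>(k, cs). k # cs) (x, xs) \<in> (\<lambda>(k, cs). k # cs) ` ({0, 1, 2, 3} \<times> codes n)" by (rule imageI)
        then show ?thesis unfolding Cons by simp
      qed
    next
      assume "zs \<in> (\<lambda>(k, cs). k # cs) ` ({0, 1, 2, 3} \<times> codes n) \<union> Cons 5 ` Xs n"
      then show "zs \<in> Xs (Suc n)" unfolding Cons Xs_def codes_def using valid_Cons by auto
    qed
  qed
qed

lemma Ys_Suc: "Ys (Suc n) = Cons 4 ` codes n"
proof (rule set_eqI)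
  fix zs
  show "zs \<in> Ys (Suc n) \<longleftrightarrow> zs \<in> Cons 4 ` codes n"
  proof (cases zs)
    case Nil then show ?thesis unfolding Ys_def codes_def by auto
  next
    case (Cons x xs)
    show ?thesis unfolding Cons Ys_def codes_def using valid_Cons[of x xs] by auto
  qed
qed

lemma sum_Xs_Suc:
  fixes g :: "nat list \<Rightarrow> real"
  shows "sum g (Xs (Suc n)) = (\<Sum>cs\<in>codes n. g (0 # cs) + g (1 # cs) + g (2 # cs) + g (3 # cs)) + (\<Sum>cs\<in>Xs n. g (5 # cs))"
proof -
  have inj1: "inj_on (\<lambda>(k, cs). k # cs) ({0, 1, 2, 3} \<times> codes n)" by (auto simp: inj_on_def)
  have inj2: "inj_on (Cons 5) (Xs n)" by (auto simp: inj_on_def)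
  have d: "(\<lambda>(k, cs). k # cs) ` ({0, 1, 2, 3} \<times> codes n) \<inter> Cons 5 ` Xs n = {}" by auto
  have "sum g (Xs (Suc n)) = sum g ((\<lambda>(k, cs). k # cs) ` ({0, 1, 2, 3} \<times> codes n)) + sum g (Cons 5 ` Xs n)"
    unfolding Xs_Suc by (rule sum.union_disjoint) (use d finite_codes finite_XY in auto)
  also have "sum g ((\<lambda>(k, cs). k # cs) ` ({0, 1, 2, 3} \<times> codes n)) = (\<Sum>(k, cs)\<in>{0, 1, 2, 3} \<times> codes n. g (k # cs))"
    by (subst sum.reindex[OF inj1]) (simp add: case_prod_unfold)
  also have "\<dots> = (\<Sum>k\<in>{0, 1, 2, 3}. \<Sum>cs\<in>codes n. g (k # cs))"
    by (rule sum.cartesian_product[symmetric])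
  also have "\<dots> = (\<Sum>cs\<in>codes n. g (0 # cs) + g (1 # cs) + g (2 # cs) + g (3 # cs))"
    by (simp add: sum.distrib)
  also have "sum g (Cons 5 ` Xs n) = (\<Sum>cs\<in>Xs n. g (5 # cs))"
    by (subst sum.reindex[OF inj2]) simp
  finally show ?thesis .
qed

lemma sum_Ys_Suc:
  fixes g :: "nat list \<Rightarrow> real"
  shows "sum g (Ys (Suc n)) = (\<Sum>cs\<in>codes n. g (4 # cs))"
  unfolding Ys_Suc by (subst sum.reindex) (auto simp: inj_on_def)

lemma sum_codes:
  fixes g :: "nat list \<Rightarrow> real"
  shows "sum g (codes n) = sum g (Xs n) + sum g (Ys n)"
  unfolding codes_XY(1) by (rule sum.union_disjoint) (use finite_XY codes_XY(2) in auto)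

lemma ss: "s * s = (2::real) \<Longrightarrow> s * (s * z) = 2 * z"
  by (simp add: mult.assoc[symmetric])

definition "ca s x y = (1/2 + s/4) * x + (1/2 - s/4) * (y::real)"
definition "cb s x y = s/8 * x - s/8 * (y::real)"
definition "cA s x y m = s/16 * x - s/16 * y + (1/4 + s/4) * m * x + (1/4 - s/4) * m * (y::real)"
definition "cB s x y m = -(3*s/32) * x + (3*s/32) * y + 1/8 * m * x + 1/8 * m * (y::real)"

lemma closed:
  defines "s \<equiv> sqrt 2"
  shows "(\<Sum>cs\<in>Xs n. 1::real) = ca s ((3 + 2*s)^n) ((3 - 2*s)^n) \<and>
         (\<Sum>cs\<in>Ys n. 1::real) = cb s ((3 + 2*s)^n) ((3 - 2*s)^n) \<and>
         (\<Sum>cs\<in>Xs n. real (nF cs)) = cA s ((3 + 2*s)^n) ((3 - 2*s)^n) (real n) \<and>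
         (\<Sum>cs\<in>Ys n. real (nF cs)) = cB s ((3 + 2*s)^n) ((3 - 2*s)^n) (real n)"
proof (induction n)
  case 0
  have "Xs 0 = {[]}" "Ys 0 = {}" unfolding Xs_def Ys_def codes_0 by auto
  then show ?case by (simp add: ca_def cb_def cA_def cB_def nF_def)
next
  case (Suc n)
  have s2: "s * s = 2" unfolding s_def by simp
  define x where "x = (3 + 2*s)^n"
  define y where "y = (3 - 2*s)^n"
  have xs: "(3 + 2*s)^Suc n = (3 + 2*s) * x" "(3 - 2*s)^Suc n = (3 - 2*s) * y" unfolding x_def y_def by simp_all
  note IH = Suc.IH[folded x_def y_def]
  have a: "(\<Sum>cs\<in>Xs (Suc n). 1::real) = 4 * (ca s x y + cb s x y) + ca s x y"
    unfolding sum_Xs_Suc using IH sum_codes[of "\<lambda>_. 1::real" n] by simp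
  have b: "(\<Sum>cs\<in>Ys (Suc n). 1::real) = ca s x y + cb s x y"
    unfolding sum_Ys_Suc using IH sum_codes[of "\<lambda>_. 1::real" n] by simp
  have A: "(\<Sum>cs\<in>Xs (Suc n). real (nF cs)) = 4 * (ca s x y + cb s x y) + 4 * (cA s x y n + cB s x y n) + cA s x y n"
  proof -
    have "(\<Sum>cs\<in>Xs (Suc n). real (nF cs)) = (\<Sum>cs\<in>codes n. 4 + 4 * real (nF cs)) + (\<Sum>cs\<in>Xs n. real (nF cs))"
      unfolding sum_Xs_Suc by (simp add: nF_Cons)
    also have "(\<Sum>cs\<in>codes n. 4 + 4 * real (nF cs)) = 4 * (\<Sum>cs\<in>codes n. 1) + 4 * (\<Sum>cs\<in>codes n. real (nF cs))"
      by (simp add: sum.distrib sum_distrib_left)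
    finally show ?thesis using IH sum_codes[of "\<lambda>_. 1::real" n] sum_codes[of "\<lambda>cs. real (nF cs)" n] by simp
  qed
  have B: "(\<Sum>cs\<in>Ys (Suc n). real (nF cs)) = cA s x y n + cB s x y n"
    unfolding sum_Ys_Suc using IH sum_codes[of "\<lambda>cs. real (nF cs)" n] by (simp add: nF_Cons)
  show ?case unfolding xs a b A B
    by (simp add: ca_def cb_def cA_def cB_def field_simps ss[OF s2])
qed

lemma count_final:
  "(\<Sum>cs\<in>codes n. real n + real (nF cs)) =
      sqrt 2 / 32 * (3 - 2 * sqrt 2) ^ n
    + (7 - 5 * sqrt 2) / 8 * real n * (3 - 2 * sqrt 2) ^ n
    - sqrt 2 / 32 * (3 + 2 * sqrt 2) ^ n
    + (7 + 5 * sqrt 2) / 8 * real n * (3 + 2 * sqrt 2) ^ n"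
proof -
  define s where "s = sqrt 2"
  have s2: "s * s = 2" unfolding s_def by simp
  note c = closed[of n, folded s_def]
  have "(\<Sum>cs\<in>codes n. real n + real (nF cs)) = real n * ((\<Sum>cs\<in>Xs n. 1) + (\<Sum>cs\<in>Ys n. 1))
       + ((\<Sum>cs\<in>Xs n. real (nF cs)) + (\<Sum>cs\<in>Ys n. real (nF cs)))"
    using sum_codes[of "\<lambda>_. 1::real" n] sum_codes[of "\<lambda>cs. real (nF cs)" n]
    by (simp add: sum.distrib)
  also have "\<dots> = s / 32 * (3 - 2 * s) ^ n + (7 - 5 * s) / 8 * real n * (3 - 2 * s) ^ n
    - s / 32 * (3 + 2 * s) ^ n + (7 + 5 * s) / 8 * real n * (3 + 2 * s) ^ n"
    unfolding c[THEN conjunct1] c[THEN conjunct2, THEN conjunct1] c[THEN conjunct2, THEN conjunct2, THEN conjunct1]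
      c[THEN conjunct2, THEN conjunct2, THEN conjunct2]
    by (simp add: ca_def cb_def cA_def cB_def field_simps ss[OF s2])
  finally show ?thesis unfolding s_def .
qed

lemma fn_Phi:
  assumes v: "valid cs" and l: "length cs = n"
  shows "forcing_number (pyrene_V n) (pyrene_E n) (Phi cs) = n + nF cs"
proof -
  define F where "F = {S. forcing_set (pyrene_V n) (pyrene_E n) (Phi cs) S}"
  have finF: "finite F"
  proof -
    have "F \<subseteq> Pow (Phi cs)" unfolding F_def forcing_set_def by auto
    then show ?thesis using finite_Phi[of cs] by (auto intro: finite_subset)
  qed
  have SfF: "Sf cs \<in> F" unfolding F_def using Sf_forcing[OF v l] by simp
  have lo: "n + nF cs \<le> card S" if "S \<in> F" for S using lower[OF v l] that unfolding F_def by simp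
  have "card (Sf cs) = n + nF cs" using lo[OF SfF] card_Sf[OF v] l by simp
  then have mem: "n + nF cs \<in> card ` F" using SfF by (metis imageI)
  have "Min (card ` F) = n + nF cs"
    by (rule Min_eqI) (use finF mem lo in auto)
  then show ?thesis unfolding forcing_number_def F_def .
qed

lemma bij_Phi: "bij_betw Phi (codes n) {M. perfect_matching (pyrene_V n) (pyrene_E n) M}"
proof (rule bij_betw_imageI)
  show "inj_on Phi (codes n)" unfolding codes_def by (auto intro: inj_onI Phi_inj)
  show "Phi ` codes n = {M. perfect_matching (pyrene_V n) (pyrene_E n) M}"
  proof
    show "Phi ` codes n \<subseteq> {M. perfect_matching (pyrene_V n) (pyrene_E n) M}"
      unfolding codes_def using Phi_PM by auto
  next
    show "{M. perfect_matching (pyrene_V n) (pyrene_E n) M} \<subseteq> Phi ` codes n"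
    proof
      fix M assume "M \<in> {M. perfect_matching (pyrene_V n) (pyrene_E n) M}"
      then have pm: "perfect_matching (pyrene_V n) (pyrene_E n) M" by simp
      have "code_of n M \<in> codes n" unfolding codes_def using code_valid[OF pm] by simp
      then show "M \<in> Phi ` codes n" using PM_is_Phi[OF pm] by blast
    qed
  qed
qed

theorem theorem3p4:
  fixes n :: nat
  shows "real (IDF (pyrene_V n) (pyrene_E n)) =
      sqrt 2 / 32 * (3 - 2 * sqrt 2) ^ n
    + (7 - 5 * sqrt 2) / 8 * real n * (3 - 2 * sqrt 2) ^ n
    - sqrt 2 / 32 * (3 + 2 * sqrt 2) ^ n
    + (7 + 5 * sqrt 2) / 8 * real n * (3 + 2 * sqrt 2) ^ n"
proof -
  have "IDF (pyrene_V n) (pyrene_E n) = (\<Sum>cs\<in>codes n. forcing_number (pyrene_V n) (pyrene_E n) (Phi cs))"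
    unfolding IDF_def by (rule sum.reindex_bij_betw[OF bij_Phi, symmetric])
  also have "\<dots> = (\<Sum>cs\<in>codes n. n + nF cs)"
    by (rule sum.cong) (auto simp: codes_def fn_Phi)
  finally have "real (IDF (pyrene_V n) (pyrene_E n)) = (\<Sum>cs\<in>codes n. real n + real (nF cs))"
    by simp
  then show ?thesis using count_final by simp
qed

end
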